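(* Let $S,T\subseteq\mathbb{Z}_{>0}$ be finite with $T\preceq S$, and let $S'\subseteq S$ with $S'\neq S$. Let $a=\min(S\setminus S')$ and $b=\min((T\triangleleft S)\setminus(T\triangleleft S'))$. Then $T\triangleleft(S\setminus\{a\})=(T\triangleleft S)\setminus\{b\}$.
   Context: For a finite set $S\subseteq\mathbb{Z}_{>0}$, $S(i)$ denotes its $i$th smallest element. $T\preceq S$ means $|T|\ge|S|$ and $T(i)<S(i)$ for all $i\in[|S|]$. For finite $S,T$, $T\triangleleft S$ is computed by going through $S$ from largest to smallest; each $s$ picks the largest element of $T$ less than $s$ not yet picked (if one exists); $T\triangleleft S$ is the set of picked elements. *)

theory Defs
  imports Main
begin

text \<open>S(i), the i-th smallest element (1-indexed) of a finite set S of naturals.\<close>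
definition ith :: "nat set \<Rightarrow> nat \<Rightarrow> nat" where
  "ith S i = sorted_list_of_set S ! (i - 1)"

definition dom_prec :: "nat set \<Rightarrow> nat set \<Rightarrow> bool" where
  "dom_prec T S \<longleftrightarrow> card T \<ge> card S \<and> (\<forall>i\<in>{1..card S}. ith T i < ith S i)"

fun tri_aux :: "nat list \<Rightarrow> nat set \<Rightarrow> nat set" where
  "tri_aux [] A = {}"
| "tri_aux (s # ss) A =
     (let C = {t \<in> A. t < s} in
      if C = {} then tri_aux ss A
      else insert (Max C) (tri_aux ss (A - {Max C})))"

definition tri :: "nat set \<Rightarrow> nat set \<Rightarrow> nat set" where
  "tri T S = tri_aux (rev (sorted_list_of_set S)) T"

end

theory Submission
  imports Defs
begin

definition mt :: "nat set \<Rightarrow> nat set \<Rightarrow> nat set" where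
  "mt T S = {t\<in>T. \<exists>x>t. card (T \<inter> {t<..<x}) < card (S \<inter> {t<..x})}"

lemma tri_aux_ne: "{t \<in> A. t < s} \<noteq> {} \<Longrightarrow>
  tri_aux (s # ss) A = insert (Max {t \<in> A. t < s}) (tri_aux ss (A - {Max {t \<in> A. t < s}}))"
proof -
  assume h: "{t \<in> A. t < s} \<noteq> {}"
  show ?thesis by (subst tri_aux.simps) (simp only: Let_def h if_False)
qed

lemma tri_aux_e: "{t \<in> A. t < s} = {} \<Longrightarrow> tri_aux (s # ss) A = tri_aux ss A"
proof -
  assume h: "{t \<in> A. t < s} = {}"
  show ?thesis by (subst tri_aux.simps) (simp only: Let_def h, simp)
qed

lemma tri_aux_sub: "finite A \<Longrightarrow> tri_aux ss A \<subseteq> A"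
proof (induction ss arbitrary: A)
  case Nil then show ?case by simp
next
  case (Cons s ss)
  show ?case
  proof (cases "{t \<in> A. t < s} = {}")
    case True then show ?thesis using Cons tri_aux_e[OF True] by simp
  next
    case False
    have "Max {t \<in> A. t < s} \<in> {t \<in> A. t < s}" using Cons.prems False by (intro Max_in) auto
    then show ?thesis using Cons.IH[of "A - {Max {t \<in> A. t < s}}"] Cons.prems tri_aux_ne[OF False] by auto
  qed
qed

lemma tri_aux_card_le: "finite A \<Longrightarrow> card (tri_aux ss A) \<le> length ss"
proof (induction ss arbitrary: A)
  case Nil then show ?case by simp
next
  case (Cons s ss)
  show ?case
  proof (cases "{t \<in> A. t < s} = {}")
    case True then show ?thesis using Cons by (simp add: Let_def le_SucI)
  next
    case False
    have "card (insert (Max {t \<in> A. t < s}) (tri_aux ss (A - {Max {t \<in> A. t < s}})))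
       \<le> Suc (card (tri_aux ss (A - {Max {t \<in> A. t < s}})))"
      by (simp add: card_insert_le_m1)
    also have "\<dots> \<le> Suc (length ss)" using Cons by simp
    moreover have "tri_aux (s # ss) A = insert (Max {t \<in> A. t < s}) (tri_aux ss (A - {Max {t \<in> A. t < s}}))"
      using False by (rule tri_aux_ne)
    ultimately show ?thesis by simp
  qed
qed

lemma mt_empty: "(\<forall>t\<in>A. \<forall>y\<in>S. y \<le> t) \<Longrightarrow> mt A S = {}"
proof -
  assume h: "\<forall>t\<in>A. \<forall>y\<in>S. y \<le> t"
  { fix t x assume "t \<in> A"
    then have "S \<inter> {t<..x} = {}" using h by force
    then have "card (S \<inter> {t<..x}) = 0" by simp }
  then show ?thesis unfolding mt_def by auto
qed

lemma char:
  assumes "sorted_wrt (>) ss" "finite A"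
  shows "tri_aux ss A = mt A (set ss)"
  using assms
proof (induction ss arbitrary: A)
  case Nil then show ?case by (simp add: mt_def)
next
  case (Cons s ss)
  have gt: "\<forall>y\<in>set ss. y < s" and sw: "sorted_wrt (>) ss" using Cons.prems by auto
  have fS: "finite (set ss)" by simp
  let ?C = "{t \<in> A. t < s}"
  show ?case
  proof (cases "?C = {}")
    case True
    then have "tri_aux (s # ss) A = tri_aux ss A" by simp
    also have "\<dots> = mt A (set ss)" using Cons sw by simp
    also have "\<dots> = {}" using True gt by (intro mt_empty) force
    also have "\<dots> = mt A (set (s # ss))" using True gt by (intro mt_empty[symmetric]) force
    finally show ?thesis .
  next
    case False
    define m where "m = Max ?C"
    have fC: "finite ?C" using Cons.prems by simp
    have mC: "m \<in> ?C" unfolding m_def using Max_in[OF fC False] .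
    have mA: "m \<in> A" "m < s" using mC by auto
    have mmax: "\<And>t. t \<in> A \<Longrightarrow> t < s \<Longrightarrow> t \<le> m" unfolding m_def using fC by auto
    have fA: "finite (A - {m})" using Cons.prems by simp
    have "tri_aux (s # ss) A = insert m (tri_aux ss (A - {m}))"
      using False unfolding m_def by (rule tri_aux_ne)
    also have "\<dots> = insert m (mt (A - {m}) (set ss))" using Cons.IH[OF sw fA] by simp
    also have "\<dots> = mt A (set (s # ss))"
    proof (rule set_eqI)
      fix t
      let ?S = "insert s (set ss)"
      show "t \<in> insert m (mt (A - {m}) (set ss)) \<longleftrightarrow> t \<in> mt A (set (s # ss))"
      proof (cases "t = m")
        case True
        have "A \<inter> {m<..<s} = {}" using mmax by force
        moreover have "s \<in> ?S \<inter> {m<..s}" using mA by auto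
        then have "card (?S \<inter> {m<..s}) > 0" using card_gt_0_iff by blast
        ultimately show ?thesis using True mA unfolding mt_def by auto
      next
        case tm: False
        show ?thesis
        proof (cases "t > m")
          case True
          have "t \<notin> mt (A - {m}) (set ss) \<and> t \<notin> mt A ?S"
          proof (cases "t \<in> A")
            case True
            then have ts: "t \<ge> s" using mmax \<open>t > m\<close> by force
            { fix x have "set ss \<inter> {t<..x} = {}" "?S \<inter> {t<..x} = {}" using ts gt by auto }
            then show ?thesis unfolding mt_def by auto
          qed (auto simp: mt_def)
          then show ?thesis using tm by simp
        next
          case False
          then have tlm: "t < m" using tm by simp
          have "(\<exists>x>t. card ((A - {m}) \<inter> {t<..<x}) < card (set ss \<inter> {t<..x})) \<longleftrightarrow>
                (\<exists>x>t. card (A \<inter> {t<..<x}) < card (?S \<inter> {t<..x}))"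
          proof
            assume "\<exists>x>t. card ((A - {m}) \<inter> {t<..<x}) < card (set ss \<inter> {t<..x})"
            then obtain x where x: "x > t" "card ((A - {m}) \<inter> {t<..<x}) < card (set ss \<inter> {t<..x})" by blast
            show "\<exists>x>t. card (A \<inter> {t<..<x}) < card (?S \<inter> {t<..x})"
            proof (cases "x \<le> m")
              case True
              have "(A - {m}) \<inter> {t<..<x} = A \<inter> {t<..<x}" using True by auto
              moreover have "set ss \<inter> {t<..x} = ?S \<inter> {t<..x}" using True mA by auto
              ultimately show ?thesis using x by metis
            next
              case xm: False
              show ?thesis
              proof (cases "x \<ge> s")
                case True
                have "A \<inter> {t<..<x} = insert m ((A - {m}) \<inter> {t<..<x})" using True mA tlm by auto
                then have e1: "card (A \<inter> {t<..<x}) = Suc (card ((A - {m}) \<inter> {t<..<x}))"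
                  using Cons.prems(2) by simp
                have "?S \<inter> {t<..x} = insert s (set ss \<inter> {t<..x})" using True mA tlm by auto
                then have e2: "card (?S \<inter> {t<..x}) = Suc (card (set ss \<inter> {t<..x}))"
                  using gt by (simp only:) (subst card_insert_disjoint, auto)
                show ?thesis using e1 e2 x by auto
              next
                case False
                have "A \<inter> {t<..<x} = insert m ((A - {m}) \<inter> {t<..<x})" using xm mA tlm by auto
                then have e1: "card (A \<inter> {t<..<x}) = Suc (card ((A - {m}) \<inter> {t<..<x}))"
                  using Cons.prems(2) by simp
                have e3: "A \<inter> {t<..<s} = A \<inter> {t<..<x}"
                proof (intro set_eqI iffI)
                  fix y assume "y \<in> A \<inter> {t<..<s}"
                  then have "y \<le> m" using mmax by auto
                  then show "y \<in> A \<inter> {t<..<x}" using xm \<open>y \<in> A \<inter> {t<..<s}\<close> by auto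
                qed (use False in auto)
                have "insert s (set ss \<inter> {t<..x}) \<subseteq> ?S \<inter> {t<..s}" using False tlm mA by auto
                then have "card (insert s (set ss \<inter> {t<..x})) \<le> card (?S \<inter> {t<..s})"
                  by (intro card_mono) auto
                moreover have "card (insert s (set ss \<inter> {t<..x})) = Suc (card (set ss \<inter> {t<..x}))"
                  using gt by (subst card_insert_disjoint, auto)
                ultimately have e2: "Suc (card (set ss \<inter> {t<..x})) \<le> card (?S \<inter> {t<..s})"
                  by simp
                show ?thesis using e1 e2 e3 x tlm mA
                  by (intro exI[of _ s]) auto
              qed
            qed
          next
            assume "\<exists>x>t. card (A \<inter> {t<..<x}) < card (?S \<inter> {t<..x})"
            then obtain x where x: "x > t" "card (A \<inter> {t<..<x}) < card (?S \<inter> {t<..x})" by blast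
            show "\<exists>x>t. card ((A - {m}) \<inter> {t<..<x}) < card (set ss \<inter> {t<..x})"
            proof (cases "x \<ge> s")
              case True
              have "A \<inter> {t<..<x} = insert m ((A - {m}) \<inter> {t<..<x})" using True mA tlm by auto
              then have e1: "card (A \<inter> {t<..<x}) = Suc (card ((A - {m}) \<inter> {t<..<x}))"
                using Cons.prems(2) by simp
              have "?S \<inter> {t<..x} = insert s (set ss \<inter> {t<..x})" using True mA tlm by auto
              then have e2: "card (?S \<inter> {t<..x}) = Suc (card (set ss \<inter> {t<..x}))"
                using gt by (simp only:) (subst card_insert_disjoint, auto)
              show ?thesis using e1 e2 x by auto
            next
              case False
              have "(A - {m}) \<inter> {t<..<x} \<subseteq> A \<inter> {t<..<x}" by auto
              then have "card ((A - {m}) \<inter> {t<..<x}) \<le> card (A \<inter> {t<..<x})"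
                using Cons.prems(2) by (intro card_mono) auto
              moreover have "set ss \<inter> {t<..x} = ?S \<inter> {t<..x}" using False by auto
              ultimately show ?thesis using x by (intro exI[of _ x]) auto
            qed
          qed
          then show ?thesis using tm unfolding mt_def by auto
        qed
      qed
    qed
    finally show ?thesis .
  qed
qed

lemma card_full:
  assumes "sorted_wrt (>) ss" "finite A"
    "\<forall>s\<in>set ss. card (set ss \<inter> {..s}) \<le> card (A \<inter> {..<s})"
  shows "card (tri_aux ss A) = length ss"
  using assms
proof (induction ss arbitrary: A)
  case Nil then show ?case by simp
next
  case (Cons s ss)
  have gt: "\<forall>y\<in>set ss. y < s" and sw: "sorted_wrt (>) ss" using Cons.prems by auto
  let ?C = "{t \<in> A. t < s}"
  have "s \<in> set (s # ss) \<inter> {..s}" by simp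
  then have "card (set (s # ss) \<inter> {..s}) > 0" using card_gt_0_iff by blast
  then have "card (A \<inter> {..<s}) > 0" using Cons.prems(3) by fastforce
  then have "A \<inter> {..<s} \<noteq> {}" by auto
  then have False': "?C \<noteq> {}" by auto
  define m where "m = Max ?C"
  have fC: "finite ?C" using Cons.prems by simp
  have mC: "m \<in> ?C" unfolding m_def using Max_in[OF fC False'] .
  have mA: "m \<in> A" "m < s" using mC by auto
  have mmax: "\<And>t. t \<in> A \<Longrightarrow> t < s \<Longrightarrow> t \<le> m" unfolding m_def using fC by auto
  have fA: "finite (A - {m})" using Cons.prems by simp
  have hyp: "\<forall>s'\<in>set ss. card (set ss \<inter> {..s'}) \<le> card ((A - {m}) \<inter> {..<s'})"
  proof
    fix s' assume s': "s' \<in> set ss"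
    then have s's: "s' < s" using gt by auto
    have h0: "card (set (s # ss) \<inter> {..s'}) \<le> card (A \<inter> {..<s'})"
      using Cons.prems(3) s' by auto
    show "card (set ss \<inter> {..s'}) \<le> card ((A - {m}) \<inter> {..<s'})"
    proof (cases "m < s'")
      case True
      have e1: "A \<inter> {..<s'} = A \<inter> {..<s}"
      proof (intro set_eqI iffI)
        fix y assume "y \<in> A \<inter> {..<s}"
        then have "y \<le> m" using mmax by auto
        then show "y \<in> A \<inter> {..<s'}" using True \<open>y \<in> A \<inter> {..<s}\<close> by auto
      qed (use s's in auto)
      have "A \<inter> {..<s'} = insert m ((A - {m}) \<inter> {..<s'})" using True mA by auto
      then have e2: "card (A \<inter> {..<s'}) = Suc (card ((A - {m}) \<inter> {..<s'}))"
        using Cons.prems(2) by simp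
      have "insert s (set ss \<inter> {..s'}) \<subseteq> set (s # ss) \<inter> {..s}" using s's by auto
      then have "card (insert s (set ss \<inter> {..s'})) \<le> card (set (s # ss) \<inter> {..s})"
        by (intro card_mono) auto
      moreover have "card (insert s (set ss \<inter> {..s'})) = Suc (card (set ss \<inter> {..s'}))"
        using gt by (subst card_insert_disjoint, auto)
      moreover have "card (set (s # ss) \<inter> {..s}) \<le> card (A \<inter> {..<s})"
        using Cons.prems(3) by auto
      ultimately show ?thesis using e1 e2 by simp
    next
      case False
      have "(A - {m}) \<inter> {..<s'} = A \<inter> {..<s'}" using False by auto
      moreover have "set ss \<inter> {..s'} = set (s # ss) \<inter> {..s'}" using s's by auto
      ultimately show ?thesis using h0 by simp
    qed
  qed
  have "tri_aux (s # ss) A = insert m (tri_aux ss (A - {m}))"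
    using False' unfolding m_def by (rule tri_aux_ne)
  moreover have "m \<notin> tri_aux ss (A - {m})" using tri_aux_sub[OF fA] by auto
  moreover have "finite (tri_aux ss (A - {m}))" using tri_aux_sub[OF fA] fA finite_subset by blast
  ultimately show ?case using Cons.IH[OF sw fA hyp] by simp
qed

lemma dom_cnt:
  assumes "finite S" "finite T" "dom_prec T S" "s \<in> S"
  shows "card (S \<inter> {..s}) \<le> card (T \<inter> {..<s})"
proof -
  define ys where "ys = sorted_list_of_set S"
  define xs where "xs = sorted_list_of_set T"
  have sy: "sorted_wrt (<) ys" "set ys = S" "length ys = card S"
    unfolding ys_def using assms by auto
  have sx: "sorted_wrt (<) xs" "set xs = T" "length xs = card T" "distinct xs"
    unfolding xs_def using assms by auto
  obtain k where k: "k < length ys" "ys ! k = s" using assms(4) sy(2) by (metis in_set_conv_nth)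
  have "Suc k \<in> {1..card S}" using k sy by auto
  then have "ith T (Suc k) < ith S (Suc k)" using assms(3) unfolding dom_prec_def by blast
  then have lt: "xs ! k < s" using k unfolding ith_def xs_def ys_def by simp
  have kx: "k < length xs" using assms(3) k sy sx unfolding dom_prec_def by auto
  have "S \<inter> {..s} \<subseteq> set (take (Suc k) ys)"
  proof
    fix y assume y: "y \<in> S \<inter> {..s}"
    then obtain j where j: "j < length ys" "ys ! j = y" using sy(2) by (metis IntD1 in_set_conv_nth)
    have "j \<le> k"
    proof (rule ccontr)
      assume "\<not> j \<le> k"
      then have "ys ! k < ys ! j" using sorted_wrt_nth_less[OF sy(1)] j by auto
      then show False using y j k by auto
    qed
    then show "y \<in> set (take (Suc k) ys)" using j by (metis in_set_conv_nth length_take min_less_iff_conj nth_take less_Suc_eq_le)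
  qed
  then have "card (S \<inter> {..s}) \<le> card (set (take (Suc k) ys))" by (intro card_mono) auto
  also have "\<dots> \<le> Suc k" using card_length[of "take (Suc k) ys"] by simp
  also have "\<dots> = card (set (take (Suc k) xs))"
    using sx(4) kx by (simp add: distinct_card)
  also have "\<dots> \<le> card (T \<inter> {..<s})"
  proof (intro card_mono)
    show "finite (T \<inter> {..<s})" using assms by simp
    show "set (take (Suc k) xs) \<subseteq> T \<inter> {..<s}"
    proof
      fix y assume "y \<in> set (take (Suc k) xs)"
      then obtain j where j: "j < Suc k" "xs ! j = y" using kx by (auto simp: in_set_conv_nth)
      have "xs ! j \<le> xs ! k"
        using j kx sorted_wrt_nth_less[OF sx(1), of j k] by (cases "j = k") auto
      then show "y \<in> T \<inter> {..<s}" using j lt kx sx(2) by auto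
    qed
  qed
  finally show ?thesis .
qed

lemma tri_mt: "finite Y \<Longrightarrow> finite X \<Longrightarrow> tri X Y = mt X Y"
  unfolding tri_def by (subst char) (auto simp: sorted_wrt_rev strict_sorted_list_of_set)

lemma mt_mono: "finite S2 \<Longrightarrow> S1 \<subseteq> S2 \<Longrightarrow> mt T S1 \<subseteq> mt T S2"
proof
  fix t assume a: "finite S2" "S1 \<subseteq> S2" "t \<in> mt T S1"
  then obtain x where x: "t \<in> T" "x > t" "card (T \<inter> {t<..<x}) < card (S1 \<inter> {t<..x})"
    unfolding mt_def by auto
  have "card (S1 \<inter> {t<..x}) \<le> card (S2 \<inter> {t<..x})" using a by (intro card_mono) auto
  then show "t \<in> mt T S2" using x unfolding mt_def by auto
qed

lemma key:
  assumes fS: "finite S" and fT: "finite T" and aS: "a \<in> S"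
    and amin: "\<forall>y\<in>S. y < a \<longrightarrow> y \<in> S'" and sub: "S' \<subseteq> S"
    and t1: "t \<in> mt T S" and t2: "t \<notin> mt T (S - {a})"
    and b1: "b \<in> mt T S" and b2: "b \<notin> mt T S'" and bt: "b < t"
  shows False
proof -
  obtain x where tT: "t \<in> T" and x: "x > t" "card (T \<inter> {t<..<x}) < card (S \<inter> {t<..x})"
    using t1 unfolding mt_def by auto
  have nR: "\<And>x. x > t \<Longrightarrow> \<not> card (T \<inter> {t<..<x}) < card ((S - {a}) \<inter> {t<..x})"
    using t2 tT unfolding mt_def by auto
  have ta: "t < a"
  proof (rule ccontr)
    assume "\<not> t < a"
    then have "(S - {a}) \<inter> {t<..x} = S \<inter> {t<..x}" by auto
    then show False using nR[OF x(1)] x(2) by simp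
  qed
  obtain y where y: "y > b" "card (T \<inter> {b<..<y}) < card (S \<inter> {b<..y})"
    using b1 unfolding mt_def by auto
  have bT: "b \<in> T" using b1 unfolding mt_def by auto
  have nS: "\<And>x. x > b \<Longrightarrow> \<not> card (T \<inter> {b<..<x}) < card (S' \<inter> {b<..x})"
    using b2 bT unfolding mt_def by auto
  show False
  proof (cases "y < a")
    case True
    have "S' \<inter> {b<..y} = S \<inter> {b<..y}" using True amin sub by auto
    then show False using nS[OF y(1)] y(2) by simp
  next
    case False
    then have ty: "t < y" using ta by simp
    have "S \<inter> {b<..y} = S \<inter> {b<..t} \<union> S \<inter> {t<..y}" using bt ty by auto
    then have c1: "card (S \<inter> {b<..y}) = card (S \<inter> {b<..t}) + card (S \<inter> {t<..y})"
      using fS by (simp add: card_Un_disjoint disjoint_iff)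
    have "S' \<inter> {b<..t} = S \<inter> {b<..t}" using ta amin sub by auto
    then have c2: "card (S \<inter> {b<..t}) \<le> card (T \<inter> {b<..<t})" using nS[OF bt] by simp
    have "S \<inter> {t<..y} = insert a ((S - {a}) \<inter> {t<..y})" using aS ta False by auto
    then have c3: "card (S \<inter> {t<..y}) = Suc (card ((S - {a}) \<inter> {t<..y}))" using fS by simp
    have c4: "card ((S - {a}) \<inter> {t<..y}) \<le> card (T \<inter> {t<..<y})" using nR[OF ty] by simp
    have "T \<inter> {b<..<y} = T \<inter> {b<..<t} \<union> insert t (T \<inter> {t<..<y})" using bt ty tT by auto
    then have c5: "card (T \<inter> {b<..<y}) = card (T \<inter> {b<..<t}) + Suc (card (T \<inter> {t<..<y}))"
      using fT by (simp add: card_Un_disjoint disjoint_iff)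
    show False using c1 c2 c3 c4 c5 y(2) by linarith
  qed
qed

theorem lemma4p15:
  fixes S T S' :: "nat set"
  assumes "finite S" and "finite T"
    and "0 \<notin> S" and "0 \<notin> T"
    and "dom_prec T S"
    and "S' \<subseteq> S" and "S' \<noteq> S"
  shows "tri T (S - {Min (S - S')}) = tri T S - {Min (tri T S - tri T S')}"
proof -
  define a where "a = Min (S - S')"
  have ne: "S - S' \<noteq> {}" using assms(6,7) by auto
  have aS: "a \<in> S - S'" unfolding a_def using Min_in[OF _ ne] assms(1) by auto
  have amin: "\<forall>y\<in>S. y < a \<longrightarrow> y \<in> S'"
  proof (intro ballI impI)
    fix y assume y: "y \<in> S" "y < a"
    show "y \<in> S'"
    proof (rule ccontr)
      assume "y \<notin> S'"
      then have "a \<le> y" unfolding a_def using y assms(1) by (intro Min_le) auto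
      then show False using y by simp
    qed
  qed
  define R where "R = S - {a}"
  have fR: "finite R" "finite S'" using assms(1,6) finite_subset unfolding R_def by auto
  have S'R: "S' \<subseteq> R" using aS assms(6) unfolding R_def by auto
  have RS: "R \<subseteq> S" unfolding R_def by auto
  have m1: "mt T S' \<subseteq> mt T R" using mt_mono[OF fR(1) S'R] .
  have m2: "mt T R \<subseteq> mt T S" using mt_mono[OF assms(1) RS] .
  have cS: "card (tri T S) = card S"
    unfolding tri_def
    by (subst card_full) (use assms dom_cnt in \<open>auto simp: sorted_wrt_rev strict_sorted_list_of_set\<close>)
  have cR: "card (tri T R) \<le> card R"
    unfolding tri_def using tri_aux_card_le[OF assms(2), of "rev (sorted_list_of_set R)"] by simp
  have "card R < card S" unfolding R_def using aS assms(1) by (metis DiffD1 card_Diff1_less)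
  then have "mt T R \<noteq> mt T S" using cS cR tri_mt[OF assms(1,2)] tri_mt[OF fR(1) assms(2)] by auto
  then obtain t0 where t0: "t0 \<in> mt T S - mt T R" using m2 by blast
  define b where "b = Min (mt T S - mt T S')"
  have fD: "finite (mt T S - mt T S')" using assms(2) unfolding mt_def by auto
  have all: "\<And>t. t \<in> mt T S - mt T R \<Longrightarrow> t = b"
  proof -
    fix t assume t: "t \<in> mt T S - mt T R"
    then have tD: "t \<in> mt T S - mt T S'" using m1 by auto
    have bD: "b \<in> mt T S - mt T S'" unfolding b_def using Min_in[OF fD] tD by auto
    have "b \<le> t" unfolding b_def using Min_le[OF fD tD] .
    moreover have "\<not> b < t"
      using key[OF assms(1,2) _ amin assms(6), of t b] aS t bD unfolding R_def by auto
    ultimately show "t = b" by simp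
  qed
  have "mt T R = mt T S - {b}" using all t0 m2 by blast
  then show ?thesis
    using tri_mt[OF assms(1,2)] tri_mt[OF fR(1) assms(2)] tri_mt[OF fR(2) assms(2)]
    unfolding a_def[symmetric] R_def[symmetric] b_def by simp
qed

end
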